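(* In the troll-farm voting model described in the context, fix a type $x\in(0,\tfrac12)\cup(\tfrac12,1)$ and suppose the sender is constrained to choose $\alpha_x\le\bar\alpha_x$, where $\bar\alpha_x<\alpha_x^*$. Then the sender optimally chooses the mass of trolls $\alpha_x^{C}=\bar\alpha_x$. Moreover: (i) if $x<\tfrac12$, the sender optimally chooses the density of trolls' messages $$\tilde f_x^{C}(s)=\begin{cases}\dfrac{1-\bar\alpha_x}{\bar\alpha_x}\kappa_x'(s) & \text{for } s\in[\hat s(x),s^*(x)],\\[1mm] 0 & \text{for } s\notin[\hat s(x),s^*(x)],\end{cases}$$ for some uniquely determined $\hat s(x)<s^*(x)$; (ii) if $x>\tfrac12$, there are multiple optimal densities of trolls' messages, and these include the density $\tilde f_x^*$ given by $\tilde f_x^*(s)=0$ for $s<s^*(x)$ and $\tilde f_x^*(s)=\frac{1-\alpha_x^*}{\alpha_x^*}\kappa_x'(s)$ for $s\ge s^*(x)$.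
   Context: Model. There is an unknown state $\theta\in\{0,1\}$, each state having prior probability $\tfrac12$. There is a continuum of voters of mass one; each voter has a type $x\in\mathbb{R}$, types being distributed according to a cdf $H$ with density $h$ having full support on $\mathbb{R}$. A voter of type $x$ who votes for the government receives payoff $1-x$ if $\theta=1$ and $-x$ if $\theta=0$; voting against gives payoff $0$. In state $\theta$, each voter independently draws an informative signal $s\in\mathbb{R}$ from a cdf $F_\theta$ with density $f_\theta$ having full support on $\mathbb{R}$, where $f_0(0)=f_1(0)$ and $m(s)=f_1(s)/f_0(s)$ is strictly increasing. For $x\in(0,1)$ let $s^*(x)=m^{-1}\!\left(\frac{x}{1-x}\right)$. A sender chooses, for each type $x$, $\alpha_x\in[0,\bar\alpha_x]$ (mass of trolls, capped by a given $\bar\alpha_x\in[0,1]$) and a probability distribution $\tilde F_x$ with density $\tilde f_x$ (trolls' messages, not depending on the state). A voter of type $x$ observes, with probability $1-\alpha_x$, her informative signal, and with probability $\alpha_x$ a message drawn from $\tilde F_x$, without knowing which; after observing $s$ her posterior is $$\pi_x(s)=\frac{(1-\alpha_x)f_1(s)+\alpha_x\tilde f_x(s)}{(1-\alpha_x)f_1(s)+\alpha_x\tilde f_x(s)+(1-\alpha_x)f_0(s)+\alpha_x\tilde f_x(s)},$$ and she votes for the government iff $\pi_x(s)\ge x$. Her probability of voting for the government in state $\theta$ is $p_\theta(x)=\int_{\{s:\pi_x(s)\ge x\}}[(1-\alpha_x)f_\theta(s)+\alpha_x\tilde f_x(s)]\,ds$, and the vote share is $V_\theta=\int p_\theta(x)\,dH(x)$.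 The sender's payoff is $u(V_\theta)$, $u$ strictly increasing; she maximises $\tfrac12u(V_0)+\tfrac12u(V_1)$, and among choices with the same vote shares in both states prefers pointwise-smaller $\alpha$ (strictly smaller for some $x$). Notation: for $x\ne\tfrac12$, $\kappa_x(s)=\frac{xF_0(s)-(1-x)F_1(s)}{1-2x}$ with derivative $\kappa_x'$ in $s$; $\alpha_x^*=\frac{\kappa_x[s^*(x)]}{\kappa_x[s^*(x)]+1}$ for $x\in(0,\tfrac12)$ and $\alpha_x^*=\frac{\kappa_x[s^*(x)]+1}{\kappa_x[s^*(x)]}$ for $x\in(\tfrac12,1)$ (the optimal mass of trolls when there is no cap). *)

theory Defs
  imports "HOL-Analysis.Analysis"
begin

definition cdf :: "(real \<Rightarrow> real) \<Rightarrow> real \<Rightarrow> real" where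
  "cdf f s = (LINT t:{..s}|lborel. f t)"

definition lr :: "(real \<Rightarrow> real) \<Rightarrow> (real \<Rightarrow> real) \<Rightarrow> real \<Rightarrow> real" where
  "lr f0 f1 s = f1 s / f0 s"

definition s_star :: "(real \<Rightarrow> real) \<Rightarrow> (real \<Rightarrow> real) \<Rightarrow> real \<Rightarrow> real" where
  "s_star f0 f1 x = (THE s. lr f0 f1 s = x / (1 - x))"

definition kappa :: "(real \<Rightarrow> real) \<Rightarrow> (real \<Rightarrow> real) \<Rightarrow> real \<Rightarrow> real \<Rightarrow> real" where
  "kappa f0 f1 x s = (x * cdf f0 s - (1 - x) * cdf f1 s) / (1 - 2 * x)"

text \<open>The derivative of kappa in s (written out: F0' = f0, F1' = f1).\<close>
definition kappa' :: "(real \<Rightarrow> real) \<Rightarrow> (real \<Rightarrow> real) \<Rightarrow> real \<Rightarrow> real \<Rightarrow> real" where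
  "kappa' f0 f1 x s = (x * f0 s - (1 - x) * f1 s) / (1 - 2 * x)"

definition alpha_star :: "(real \<Rightarrow> real) \<Rightarrow> (real \<Rightarrow> real) \<Rightarrow> real \<Rightarrow> real" where
  "alpha_star f0 f1 x =
     (let k = kappa f0 f1 x (s_star f0 f1 x) in
      if x < 1/2 then k / (k + 1) else (k + 1) / k)"

definition is_density :: "(real \<Rightarrow> real) \<Rightarrow> bool" where
  "is_density g \<longleftrightarrow> g \<in> borel_measurable borel \<and> (\<forall>s. 0 \<le> g s)
     \<and> integrable lborel g \<and> integral\<^sup>L lborel g = 1"

text \<open>Standing assumptions on the signal densities: full support, f0(0) = f1(0),
  strictly increasing likelihood ratio m whose inverse is defined on (0,inf)
  (needed for s*(x) to be defined for every x in (0,1)).\<close>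
definition signal_model :: "(real \<Rightarrow> real) \<Rightarrow> (real \<Rightarrow> real) \<Rightarrow> bool" where
  "signal_model f0 f1 \<longleftrightarrow> is_density f0 \<and> is_density f1
     \<and> (\<forall>s. 0 < f0 s \<and> 0 < f1 s) \<and> f0 0 = f1 0
     \<and> strict_mono (lr f0 f1) \<and> (\<forall>y>0. \<exists>s. lr f0 f1 s = y)"

definition posterior :: "(real \<Rightarrow> real) \<Rightarrow> (real \<Rightarrow> real) \<Rightarrow> real \<Rightarrow> (real \<Rightarrow> real) \<Rightarrow> real \<Rightarrow> real" where
  "posterior f0 f1 a g s =
     ((1 - a) * f1 s + a * g s) / ((1 - a) * f1 s + a * g s + (1 - a) * f0 s + a * g s)"

text \<open>Probability p_theta(x) that type x votes for the government; ftheta is f0 or f1.\<close>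
definition vote_prob :: "(real \<Rightarrow> real) \<Rightarrow> (real \<Rightarrow> real) \<Rightarrow> real \<Rightarrow> real \<Rightarrow> (real \<Rightarrow> real)
    \<Rightarrow> (real \<Rightarrow> real) \<Rightarrow> real" where
  "vote_prob f0 f1 x a g ftheta =
     (LINT s:{s. x \<le> posterior f0 f1 a g s}|lborel. (1 - a) * ftheta s + a * g s)"

definition admissible :: "real \<Rightarrow> real \<Rightarrow> (real \<Rightarrow> real) \<Rightarrow> bool" where
  "admissible abar a g \<longleftrightarrow> 0 \<le> a \<and> a \<le> abar \<and> is_density g"

text \<open>Optimality of the choice (a, g) for type x under cap abar: it maximizes the
  voting probability of type x in both states (which is what maximizing
  1/2 u(V0) + 1/2 u(V1) amounts to type by type), and among choices with the
  same voting probabilities no strictly smaller troll mass is possible.\<close>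
definition optimal :: "(real \<Rightarrow> real) \<Rightarrow> (real \<Rightarrow> real) \<Rightarrow> real \<Rightarrow> real \<Rightarrow> real \<Rightarrow> (real \<Rightarrow> real) \<Rightarrow> bool" where
  "optimal f0 f1 x abar a g \<longleftrightarrow> admissible abar a g
     \<and> (\<forall>a' g'. admissible abar a' g' \<longrightarrow>
          vote_prob f0 f1 x a' g' f0 \<le> vote_prob f0 f1 x a g f0
        \<and> vote_prob f0 f1 x a' g' f1 \<le> vote_prob f0 f1 x a g f1)
     \<and> \<not> (\<exists>a' g'. admissible abar a' g'
          \<and> vote_prob f0 f1 x a' g' f0 = vote_prob f0 f1 x a g f0
          \<and> vote_prob f0 f1 x a' g' f1 = vote_prob f0 f1 x a g f1
          \<and> a' < a)"

definition f_C :: "(real \<Rightarrow> real) \<Rightarrow> (real \<Rightarrow> real) \<Rightarrow> real \<Rightarrow> real \<Rightarrow> real \<Rightarrow> real \<Rightarrow> real" where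
  "f_C f0 f1 x abar sh s =
     (if sh \<le> s \<and> s \<le> s_star f0 f1 x then (1 - abar) / abar * kappa' f0 f1 x s else 0)"

definition f_star :: "(real \<Rightarrow> real) \<Rightarrow> (real \<Rightarrow> real) \<Rightarrow> real \<Rightarrow> real \<Rightarrow> real" where
  "f_star f0 f1 x s =
     (if s < s_star f0 f1 x then 0
      else (1 - alpha_star f0 f1 x) / alpha_star f0 f1 x * kappa' f0 f1 x s)"

end

theory Submission
  imports Defs
begin

definition II :: "real set \<Rightarrow> (real \<Rightarrow> real) \<Rightarrow> real" where
  "II A h = integral\<^sup>L lborel (\<lambda>s. indicator A s * h s)"

lemma set_II: "set_lebesgue_integral lborel A h = II A h"
  unfolding set_lebesgue_integral_def II_def by simp

lemma II_int[simp]: "A \<in> sets borel \<Longrightarrow> integrable lborel (h::real\<Rightarrow>real) \<Longrightarrow> integrable lborel (\<lambda>s. indicator A s * h s)"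
  using integrable_mult_indicator[of A lborel h] by simp

lemma hb_II: "A \<in> sets borel \<Longrightarrow> integrable lborel h \<Longrightarrow> has_bochner_integral lborel (\<lambda>s. indicator A s * h s) (II A h)"
  unfolding II_def by (intro has_bochner_integral_integrable II_int)

lemma hb_int: "integrable lborel h \<Longrightarrow> has_bochner_integral lborel h (integral\<^sup>L lborel h)"
  by (rule has_bochner_integral_integrable)

lemma II_compl: "A \<in> sets borel \<Longrightarrow> integrable lborel h \<Longrightarrow> II A h + II (- A) h = integral\<^sup>L lborel h"
proof -
  assume A: "A \<in> sets borel" and h: "integrable lborel h"
  have "has_bochner_integral lborel (\<lambda>s. indicator A s * h s + indicator (- A) s * h s) (II A h + II (- A) h)"
    using A h by (intro has_bochner_integral_add hb_II) auto
  moreover have "(\<lambda>s. indicator A s * h s + indicator (- A) s * h s) = h"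
    by (auto simp: fun_eq_iff indicator_def)
  ultimately show ?thesis using has_bochner_integral_integral_eq by metis
qed

lemma II_point: "integrable lborel h \<Longrightarrow> II {..s} h = II {..<s} h"
  unfolding II_def
proof (rule integral_cong_AE)
  assume "integrable lborel h"
  then show "(\<lambda>t. indicator {..s} t * h t) \<in> borel_measurable lborel" "(\<lambda>t. indicator {..<s} t * h t) \<in> borel_measurable lborel"
    by (auto intro!: borel_measurable_integrable)
  show "AE t in lborel. indicator {..s} t * h t = indicator {..<s} t * h t"
    using AE_lborel_singleton[of s] by eventually_elim (auto simp: indicator_def)
qed

lemma II_pos:
  assumes A: "A \<in> sets borel" and ab: "a < b" "{a<..<b} \<subseteq> A" and h: "integrable lborel h"
    and pos: "\<And>s. s \<in> A \<Longrightarrow> 0 < h s"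
  shows "0 < II A h"
proof -
  have "emeasure lborel {a<..<b} \<le> emeasure lborel A" using A ab by (intro emeasure_mono) auto
  moreover have "0 < emeasure lborel {a<..<b}" using ab by simp
  ultimately have m: "0 < emeasure lborel A" by (rule order.strict_trans2[rotated])
  have nn: "\<And>s. 0 \<le> indicator A s * h s" using pos by (auto simp: indicator_def less_imp_le)
  have "II A h \<ge> 0" unfolding II_def using nn by (intro integral_nonneg_AE) auto
  moreover have "II A h \<noteq> 0"
  proof
    assume "II A h = 0"
    then have "AE s in lborel. indicator A s * h s = 0"
      unfolding II_def using nn A h by (subst (asm) integral_nonneg_eq_0_iff_AE) auto
    then have "AE s in lborel. s \<notin> A"
      by eventually_elim (use pos in \<open>force simp: indicator_def\<close>)
    then have "emeasure lborel A = 0"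
      using A by (subst (asm) AE_iff_measurable[of A]) auto
    then show False using m by simp
  qed
  ultimately show ?thesis by linarith
qed

lemma II_split:
  assumes "a \<le> s" "integrable lborel h"
  shows "II {..s} h = II {..<a} h + integral {a..s} h"
proof -
  have si: "set_integrable lborel {a..s} h" unfolding set_integrable_def using assms by simp
  have e: "(\<lambda>t. indicator {..s} t * h t) = (\<lambda>t. indicator {..<a} t * h t + indicator {a..s} t * h t)"
    using assms(1) by (auto simp: indicator_def fun_eq_iff)
  have "II {..s} h = II {..<a} h + II {a..s} h"
    unfolding II_def e using assms by (subst Bochner_Integration.integral_add) auto
  also have "II {a..s} h = integral {a..s} h"
    using set_borel_integral_eq_integral(2)[OF si] by (simp add: set_II)
  finally show ?thesis .
qed

lemma II_cont:
  assumes h: "integrable lborel h"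
  shows "continuous_on UNIV (\<lambda>s. II {..s} h)"
proof (rule continuous_at_imp_continuous_on, safe)
  fix s0 :: real
  let ?a = "s0 - 1" and ?b = "s0 + 1"
  have si: "set_integrable lborel {?a..?b} h" unfolding set_integrable_def using assms by simp
  have "h integrable_on {?a..?b}" using set_borel_integral_eq_integral(1)[OF si] .
  then have "continuous_on {?a..?b} (\<lambda>s. II {..<?a} h + integral {?a..s} h)"
    by (intro continuous_intros indefinite_integral_continuous_1)
  then have "continuous_on {?a..?b} (\<lambda>s. II {..s} h)"
    by (rule continuous_on_eq) (use II_split[OF _ h] in auto)
  then show "isCont (\<lambda>s. II {..s} h) s0"
    by (rule continuous_on_interior) (auto simp: interior_atLeastAtMost_real)
qed

lemma II_bot:
  assumes h: "integrable lborel h"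
  shows "((\<lambda>s. II {..s} h) \<longlongrightarrow> 0) at_bot"
proof (rule tendsto_at_botI_sequentially)
  fix X :: "nat \<Rightarrow> real" assume X: "filterlim X at_bot sequentially"
  have m: "(\<lambda>s. indicator {..X n} s * h s) \<in> borel_measurable lborel" for n
    using h by (intro borel_measurable_integrable) simp
  have l: "AE s in lborel. (\<lambda>n. indicator {..X n} s * h s) \<longlonglongrightarrow> 0"
  proof
    fix s
    from X have "eventually (\<lambda>n. X n < s) sequentially"
      unfolding filterlim_at_bot_dense by auto
    then show "(\<lambda>n. indicator {..X n} s * h s) \<longlonglongrightarrow> 0"
      by (intro tendsto_eventually) (auto elim!: eventually_mono)
  qed
  have b: "AE s in lborel. norm (indicator {..X n} s * h s) \<le> norm (h s)" for n
    by (auto simp: indicator_def)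
  have "(\<lambda>n. integral\<^sup>L lborel (\<lambda>s. indicator {..X n} s * h s)) \<longlonglongrightarrow> integral\<^sup>L lborel (\<lambda>s. 0::real)"
    using integral_dominated_convergence[of "\<lambda>s. 0" lborel "\<lambda>n s. indicator {..X n} s * h s" "\<lambda>s. norm (h s)"]
      m l b h by simp
  then show "(\<lambda>n. II {..X n} h) \<longlonglongrightarrow> 0" unfolding II_def by simp
qed

locale tm =
  fixes f0 f1 :: "real \<Rightarrow> real" and x :: real
  assumes sm: "signal_model f0 f1" and x0: "0 < x" and x1: "x < 1" and xh: "x \<noteq> 1/2"
begin

abbreviation "ss \<equiv> s_star f0 f1 x"
abbreviation "k \<equiv> kappa' f0 f1 x"

lemma f0_pos: "0 < f0 s" and f1_pos: "0 < f1 s"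
  using sm unfolding signal_model_def by auto

lemma f0_int[simp]: "integrable lborel f0" and f1_int[simp]: "integrable lborel f1"
  and f0_one: "integral\<^sup>L lborel f0 = 1" and f1_one: "integral\<^sup>L lborel f1 = 1"
  using sm unfolding signal_model_def is_density_def by auto

lemma f0_meas[measurable]: "f0 \<in> borel_measurable borel" and f1_meas[measurable]: "f1 \<in> borel_measurable borel"
  using sm unfolding signal_model_def is_density_def by auto

lemma lr_mono: "strict_mono (lr f0 f1)"
  using sm unfolding signal_model_def by blast
lemma A: "\<exists>s. lr f0 f1 s = x / (1 - x)"
proof -
  have "x / (1-x) > 0" using x0 x1 by auto
  moreover have "\<forall>y>0. \<exists>s. lr f0 f1 s = y" using sm unfolding signal_model_def by blast
  ultimately show ?thesis by blast
qed
lemma B: "lr f0 f1 t = lr f0 f1 s \<Longrightarrow> t = s"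
  using strict_mono_eq[OF lr_mono] by blast
lemma lr_ss: "lr f0 f1 ss = x / (1 - x)"
proof -
  obtain s where s: "lr f0 f1 s = x / (1 - x)" using A by blast
  have "ss = s" unfolding s_star_def 
  proof (rule the_equality)
    show "lr f0 f1 s = x / (1 - x)" by (rule s)
    fix t assume "lr f0 f1 t = x / (1 - x)"
    then show "t = s" using B s by simp
  qed
  then show ?thesis using s by simp
qed

definition D where "D s = x * f0 s - (1 - x) * f1 s"

lemma D_pos_iff: "0 < D s \<longleftrightarrow> s < ss"
proof -
  have "0 < D s \<longleftrightarrow> lr f0 f1 s < x / (1 - x)"
    using f0_pos[of s] f1_pos[of s] x0 x1
    by (simp add: D_def lr_def divide_simps mult.commute)
  also have "\<dots> \<longleftrightarrow> lr f0 f1 s < lr f0 f1 ss" using lr_ss by simp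
  also have "\<dots> \<longleftrightarrow> s < ss" using lr_mono strict_mono_less by blast
  finally show ?thesis .
qed

lemma D_neg_iff: "D s < 0 \<longleftrightarrow> ss < s"
proof -
  have "D s < 0 \<longleftrightarrow> x / (1 - x) < lr f0 f1 s"
    using f0_pos[of s] f1_pos[of s] x0 x1
    by (simp add: D_def lr_def divide_simps mult.commute)
  also have "\<dots> \<longleftrightarrow> lr f0 f1 ss < lr f0 f1 s" using lr_ss by simp
  also have "\<dots> \<longleftrightarrow> ss < s" using lr_mono strict_mono_less by blast
  finally show ?thesis .
qed

lemma D_ss: "D ss = 0"
  using D_pos_iff[of ss] D_neg_iff[of ss] by auto

lemma k_eq: "k s = D s / (1 - 2 * x)"
  unfolding kappa'_def D_def by simp

lemma D_meas[measurable]: "D \<in> borel_measurable borel"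
  unfolding D_def by measurable

lemma k_meas[measurable]: "k \<in> borel_measurable borel"
  unfolding kappa'_def by measurable

lemma k_int[simp]: "integrable lborel k"
  unfolding kappa'_def by (intro integrable_divide integrable_diff integrable_mult_right) auto


lemma II_k: "A \<in> sets borel \<Longrightarrow> II A k = (x * II A f0 - (1 - x) * II A f1) / (1 - 2 * x)"
proof -
  assume A: "A \<in> sets borel"
  have e: "(\<lambda>s. indicator A s * k s) = (\<lambda>s. (x * (indicator A s * f0 s) - (1 - x) * (indicator A s * f1 s)) / (1 - 2 * x))"
    by (auto simp: fun_eq_iff kappa'_def algebra_simps times_divide_eq_right)
  have "has_bochner_integral lborel (\<lambda>s. (x * (indicator A s * f0 s) - (1 - x) * (indicator A s * f1 s)) / (1 - 2 * x))
     ((x * II A f0 - (1 - x) * II A f1) / (1 - 2 * x))"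
    by (intro has_bochner_integral_divide_zero has_bochner_integral_diff has_bochner_integral_mult_right hb_II A) auto
  then show ?thesis unfolding II_def[of A k] e by (rule has_bochner_integral_integral_eq)
qed


lemma II_UNIV: "II UNIV h = integral\<^sup>L lborel h"
  unfolding II_def by simp

lemma cdf_II: "cdf f s = II {..s} f"
  unfolding cdf_def set_II ..

lemma kappa_II: "kappa f0 f1 x s = II {..s} k"
  using II_k[of "{..s}"] unfolding kappa_def cdf_II by simp

lemma k_total: "integral\<^sup>L lborel k = -1"
proof -
  have "integral\<^sup>L lborel k = (x * 1 - (1 - x) * 1) / (1 - 2 * x)"
    using II_k[of UNIV] by (simp add: II_UNIV f0_one f1_one)
  also have "\<dots> = -1" using xh by (simp add: field_simps)
  finally show ?thesis .
qed

lemma post_iff: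
  assumes "0 \<le> a" "a < 1" "0 \<le> g s"
  shows "x \<le> posterior f0 f1 a g s \<longleftrightarrow> (1 - a) * D s \<le> (1 - 2 * x) * (a * g s)"
proof -
  define P where "P = (1 - a) * f1 s + a * g s"
  define Q where "Q = (1 - a) * f0 s + a * g s"
  have P: "0 < P" unfolding P_def using assms f1_pos[of s] by (intro add_pos_nonneg) auto
  have Q: "0 < Q" unfolding Q_def using assms f0_pos[of s] by (intro add_pos_nonneg) auto
  have post: "posterior f0 f1 a g s = P / (P + Q)"
    unfolding posterior_def P_def Q_def by (simp add: add.assoc)
  have "x \<le> P / (P + Q) \<longleftrightarrow> x * (P + Q) \<le> P" using P Q by (simp add: pos_le_divide_eq)
  also have "x * (P + Q) - P = (1 - a) * D s - (1 - 2 * x) * (a * g s)"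
    unfolding P_def Q_def D_def by (simp add: algebra_simps)
  then have "x * (P + Q) \<le> P \<longleftrightarrow> (1 - a) * D s \<le> (1 - 2 * x) * (a * g s)" by linarith
  finally show ?thesis using post by simp
qed

lemma II_lin2:
  assumes "S \<in> sets borel" "integrable lborel f" "integrable lborel g"
  shows "II S (\<lambda>s. c1 * f s + c2 * g s) = c1 * II S f + c2 * II S g"
proof -
  have "has_bochner_integral lborel (\<lambda>s. c1 * (indicator S s * f s) + c2 * (indicator S s * g s)) (c1 * II S f + c2 * II S g)"
    using assms by (intro has_bochner_integral_add has_bochner_integral_mult_right hb_II) auto
  moreover have "(\<lambda>s. c1 * (indicator S s * f s) + c2 * (indicator S s * g s)) = (\<lambda>s. indicator S s * (c1 * f s + c2 * g s))"
    by (auto simp: fun_eq_iff algebra_simps)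
  ultimately show ?thesis unfolding II_def using has_bochner_integral_integral_eq by metis
qed

definition SS where "SS a g = {s. (1 - a) * D s \<le> (1 - 2 * x) * (a * g s)}"

lemma SS_meas: assumes [measurable]: "g \<in> borel_measurable borel" shows "SS a g \<in> sets borel"
  unfolding SS_def by measurable

lemma vote_eq:
  assumes "0 \<le> a" "a < 1" "is_density g" "integrable lborel f"
  shows "vote_prob f0 f1 x a g f = (1 - a) * II (SS a g) f + a * II (SS a g) g"
proof -
  have g: "g \<in> borel_measurable borel" "integrable lborel g" "\<And>s. 0 \<le> g s"
    using assms(3) unfolding is_density_def by auto
  have "{s. x \<le> posterior f0 f1 a g s} = SS a g"
  proof -
    have "x \<le> posterior f0 f1 a g s \<longleftrightarrow> (1 - a) * D s \<le> (1 - 2 * x) * (a * g s)" for s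
      using post_iff[of a g s] assms(1,2) g(3) by blast
    then show ?thesis unfolding SS_def by auto
  qed
  then have "vote_prob f0 f1 x a g f = II (SS a g) (\<lambda>s. (1 - a) * f s + a * g s)"
    unfolding vote_prob_def set_II by simp
  also have "\<dots> = (1 - a) * II (SS a g) f + a * II (SS a g) g"
    using g assms(4) SS_meas[OF g(1)] by (intro II_lin2) auto
  finally show ?thesis .
qed

lemma SS_zero: "SS 0 g = SS 0 h"
  unfolding SS_def by simp

lemma vote_zero:
  assumes "is_density g" "is_density h" "integrable lborel f"
  shows "vote_prob f0 f1 x 0 g f = vote_prob f0 f1 x 0 h f"
  using vote_eq[of 0 g f] vote_eq[of 0 h f] assms SS_zero[of g h] by simp


lemma opt_zero: assumes "is_density g" shows "optimal f0 f1 x 0 0 g"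
  unfolding optimal_def
proof (intro conjI allI impI)
  show "admissible 0 0 g" using assms unfolding admissible_def by simp
  fix a' g' assume ad: "admissible 0 a' g'"
  then have "a' = 0" "is_density g'" unfolding admissible_def by auto
  then show "vote_prob f0 f1 x a' g' f0 \<le> vote_prob f0 f1 x 0 g f0"
    "vote_prob f0 f1 x a' g' f1 \<le> vote_prob f0 f1 x 0 g f1"
    using vote_zero[of g' g] assms by auto
next
  show "\<not> (\<exists>a' g'. admissible 0 a' g' \<and> vote_prob f0 f1 x a' g' f0 = vote_prob f0 f1 x 0 g f0
      \<and> vote_prob f0 f1 x a' g' f1 = vote_prob f0 f1 x 0 g f1 \<and> a' < 0)"
    unfolding admissible_def by auto
qed

lemma f0_density: "is_density f0"
  using sm unfolding signal_model_def by blast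

lemma II_mono: "A \<subseteq> B \<Longrightarrow> A \<in> sets borel \<Longrightarrow> B \<in> sets borel \<Longrightarrow> integrable lborel h \<Longrightarrow> (\<And>s. 0 \<le> h s)
  \<Longrightarrow> II A h \<le> II B h"
  unfolding II_def by (intro integral_mono II_int) (auto simp: indicator_def)

lemma not_AE_eq:
  fixes a b :: real and h1 h2 :: "real \<Rightarrow> real"
  assumes "a < b" "\<And>s. a < s \<Longrightarrow> s < b \<Longrightarrow> h1 s \<noteq> h2 s"
  shows "\<not> (AE s in lborel. h1 s = h2 s)"
proof
  assume "AE s in lborel. h1 s = h2 s"
  then have "AE s in lborel. s \<notin> {a<..<b}" by eventually_elim (use assms in auto)
  moreover have m: "{a<..<b} \<in> sets lborel" using borel_open[OF open_greaterThanLessThan, of a b] by simp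
  ultimately have "emeasure lborel {a<..<b} = 0" by (subst (asm) AE_iff_measurable[of "{a<..<b}"]) auto
  then show False using assms(1) by simp
qed

end

locale tm_lo = tm + assumes xl: "x < 1/2"
begin

lemma k_pos_iff: "0 < k s \<longleftrightarrow> s < ss"
  using D_pos_iff[of s] xl by (simp add: k_eq divide_pos_pos zero_less_divide_iff)

lemma k_neg_iff: "k s < 0 \<longleftrightarrow> ss < s"
  using D_neg_iff[of s] xl by (simp add: k_eq divide_less_0_iff)

lemma SS_lo: "SS a g = {s. (1 - a) * k s \<le> a * g s}"
proof -
  have "(1 - a) * D s \<le> (1 - 2 * x) * (a * g s) \<longleftrightarrow> (1 - a) * k s \<le> a * g s" for s
  proof -
    have "(1 - a) * k s = ((1 - a) * D s) / (1 - 2 * x)" by (simp add: k_eq)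
    then show ?thesis using xl by (simp add: divide_le_eq mult.commute)
  qed
  then show ?thesis unfolding SS_def by auto
qed

lemma ratio_gen:
  assumes "s < t" "x * (f1 s * f0 t) < x * (f1 t * f0 s)"
  shows True by simp

lemma lr_lt: "s < t \<Longrightarrow> f1 s * f0 t < f1 t * f0 s"
proof -
  assume "s < t"
  then have "lr f0 f1 s < lr f0 f1 t" using lr_mono strict_monoD by blast
  then show ?thesis using f0_pos[of s] f0_pos[of t] by (simp add: lr_def divide_simps)
qed

lemma ratio0: "s < t \<Longrightarrow> f0 s * k t < f0 t * k s"
proof -
  assume st: "s < t"
  have "f0 s * D t - f0 t * D s = (1 - x) * (f1 s * f0 t - f1 t * f0 s)"
    unfolding D_def by (simp add: algebra_simps)
  moreover have "(1 - x) * (f1 s * f0 t - f1 t * f0 s) < 0"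
    using lr_lt[OF st] x1 by (intro mult_pos_neg) auto
  ultimately have "f0 s * D t < f0 t * D s" by linarith
  then have "f0 s * D t / (1 - 2 * x) < f0 t * D s / (1 - 2 * x)"
    using xl by (intro divide_strict_right_mono) auto
  then show ?thesis by (simp add: k_eq)
qed

lemma ratio1: "s < t \<Longrightarrow> f1 s * k t < f1 t * k s"
proof -
  assume st: "s < t"
  have "f1 s * D t - f1 t * D s = x * (f1 s * f0 t - f1 t * f0 s)"
    unfolding D_def by (simp add: algebra_simps)
  moreover have "x * (f1 s * f0 t - f1 t * f0 s) < 0"
    using lr_lt[OF st] x0 by (intro mult_pos_neg) auto
  ultimately have "f1 s * D t < f1 t * D s" by linarith
  then have "f1 s * D t / (1 - 2 * x) < f1 t * D s / (1 - 2 * x)"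
    using xl by (intro divide_strict_right_mono) auto
  then show ?thesis by (simp add: k_eq)
qed

lemma kss_pos: "0 < II {..ss} k"
proof -
  have "0 < II {..<ss} k"
    by (rule II_pos[of _ "ss - 1" ss]) (auto simp: k_pos_iff)
  then show ?thesis using II_point[of k ss] by simp
qed


lemma fC_fun: "f_C f0 f1 x ab t = (\<lambda>s. ((1 - ab) / ab) * (indicator {t..ss} s * k s))"
  by (rule ext) (simp add: f_C_def indicator_def)

lemma k_nonneg_le: "s \<le> ss \<Longrightarrow> 0 \<le> k s"
  using k_neg_iff[of s] by simp

lemma II_Icc: assumes "t \<le> ss" shows "II {t..ss} k = II {..ss} k - II {..t} k"
proof -
  have "has_bochner_integral lborel (\<lambda>s. indicator {..ss} s * k s - indicator {..<t} s * k s)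
      (II {..ss} k - II {..<t} k)"
    by (intro has_bochner_integral_diff hb_II k_int) auto
  moreover have "(\<lambda>s. indicator {..ss} s * k s - indicator {..<t} s * k s) = (\<lambda>s. indicator {t..ss} s * k s)"
    using assms by (auto simp: fun_eq_iff indicator_def)
  ultimately have "II {t..ss} k = II {..ss} k - II {..<t} k"
    unfolding II_def using has_bochner_integral_integral_eq by metis
  then show ?thesis using II_point[of k t] by simp
qed

lemma kap_strict: assumes "s1 < s2" "s2 \<le> ss" shows "II {..s1} k < II {..s2} k"
proof -
  have "has_bochner_integral lborel (\<lambda>s. indicator {..<s2} s * k s - indicator {..s1} s * k s)
      (II {..<s2} k - II {..s1} k)"
    by (intro has_bochner_integral_diff hb_II k_int) auto
  moreover have "(\<lambda>s. indicator {..<s2} s * k s - indicator {..s1} s * k s) = (\<lambda>s. indicator {s1<..<s2} s * k s)"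
    using assms by (auto simp: fun_eq_iff indicator_def)
  ultimately have "II {s1<..<s2} k = II {..<s2} k - II {..s1} k"
    unfolding II_def using has_bochner_integral_integral_eq by metis
  moreover have "0 < II {s1<..<s2} k"
    by (rule II_pos[of _ s1 s2]) (use assms in \<open>auto simp: k_pos_iff\<close>)
  ultimately show ?thesis using II_point[of k s2] by simp
qed

lemma fC_int: assumes "t \<le> ss"
  shows "integral\<^sup>L lborel (f_C f0 f1 x ab t) = (1 - ab) / ab * (II {..ss} k - II {..t} k)"
  using II_Icc[OF assms] unfolding fC_fun II_def by simp

lemma fC_density:
  assumes "0 < ab" "ab < 1" "t \<le> ss" "II {..t} k = II {..ss} k - ab / (1 - ab)"
  shows "is_density (f_C f0 f1 x ab t)"
  unfolding is_density_def
proof (intro conjI allI)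
  show "f_C f0 f1 x ab t \<in> borel_measurable borel" unfolding fC_fun by measurable
  show "0 \<le> f_C f0 f1 x ab t s" for s
    using assms k_nonneg_le[of s] unfolding fC_fun by (auto simp: indicator_def)
  show "integrable lborel (f_C f0 f1 x ab t)"
    unfolding fC_fun by (intro integrable_mult_right II_int) auto
  show "integral\<^sup>L lborel (f_C f0 f1 x ab t) = 1"
    unfolding fC_int[OF assms(3)] assms(4) using assms(1,2) by simp
qed

definition good where "good f \<longleftrightarrow> (\<forall>s. 0 < f s) \<and> integrable lborel f \<and> integral\<^sup>L lborel f = 1
   \<and> (\<forall>s t. s < t \<longrightarrow> f s * k t < f t * k s)"

lemma good0: "good f0" unfolding good_def using f0_pos f0_int f0_one ratio0 by blast
lemma good1: "good f1" unfolding good_def using f1_pos f1_int f1_one ratio1 by blast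


lemma exists_sh:
  assumes ab0: "0 < abar" and abs: "abar < alpha_star f0 f1 x"
  shows "abar < 1" "\<exists>sh. sh < ss \<and> II {..sh} k = II {..ss} k - abar / (1 - abar)"
proof -
  define K where "K = II {..ss} k"
  have Kp: "0 < K" unfolding K_def by (rule kss_pos)
  have as: "alpha_star f0 f1 x = K / (K + 1)"
    unfolding alpha_star_def Let_def kappa_II K_def using xl by simp
  have "abar * (K + 1) < K" using abs Kp unfolding as by (simp add: pos_less_divide_eq)
  then have ab1: "abar < 1" using Kp ab0 by (simp add: algebra_simps) (smt (verit) mult_less_cancel_left2)
  show "abar < 1" by (rule ab1)
  have "abar < K * (1 - abar)" using \<open>abar * (K + 1) < K\<close> by (simp add: algebra_simps)
  then have lt: "abar / (1 - abar) < K" using ab1 by (simp add: divide_less_eq)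
  define y where "y = K - abar / (1 - abar)"
  have y0: "0 < y" using lt unfolding y_def by simp
  have yK: "y < K" unfolding y_def using ab0 ab1 by simp
  have "eventually (\<lambda>s. II {..s} k < y) at_bot"
    using order_tendstoD(2)[OF II_bot[OF k_int] y0] .
  then obtain N where N: "\<And>s. s \<le> N \<Longrightarrow> II {..s} k < y" unfolding eventually_at_bot_linorder by blast
  define s1 where "s1 = min N ss"
  have s1: "II {..s1} k \<le> y" "s1 \<le> ss" using N[of s1] unfolding s1_def by auto
  have "continuous_on {s1..ss} (\<lambda>s. II {..s} k)"
    using II_cont[OF k_int] by (rule continuous_on_subset) auto
  then obtain sh where sh: "s1 \<le> sh" "sh \<le> ss" "II {..sh} k = y"
    using IVT'[of "\<lambda>s. II {..s} k" s1 y ss] s1 yK unfolding K_def by auto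
  have "sh \<noteq> ss" using sh(3) yK unfolding K_def by auto
  then show "\<exists>sh. sh < ss \<and> II {..sh} k = II {..ss} k - abar / (1 - abar)"
  proof -
    have "sh < ss" using \<open>sh \<noteq> ss\<close> sh(2) by simp
    then show ?thesis using sh(3) unfolding y_def K_def by blast
  qed
qed

end

locale tm_opt = tm_lo +
  fixes abar sh :: real
  assumes ab0: "0 < abar" and ab1: "abar < 1" and sh_lt: "sh < ss"
    and sh_eq: "II {..sh} k = II {..ss} k - abar / (1 - abar)"
begin

definition U where "U a g = {s. a * g s < (1 - a) * k s}"
definition T where "T a g = {s. s \<le> ss \<and> (1 - a) * k s \<le> a * g s}"
definition lam where "lam f = f sh / k sh"
definition P1 where "P1 f a g s = (1 - a) * (f s - lam f * k s) * (indicator (U a g) s - indicator {..sh} s)"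
definition P2 where "P2 f a g s = lam f * (a * g s - (1 - a) * k s * indicator (T a g) s)"
definition P3 where "P3 a g s = a * g s * indicator (U a g) s"
definition Phi where "Phi f a g s = P1 f a g s + P2 f a g s + P3 a g s"

lemma k_sh: "0 < k sh" using sh_lt k_pos_iff by simp

lemma lam_pos: "(\<And>s. 0 < f s) \<Longrightarrow> 0 < lam f"
  unfolding lam_def using k_sh by simp

lemma U_meas: assumes [measurable]: "g \<in> borel_measurable borel" shows "U a g \<in> sets borel"
  unfolding U_def by measurable

lemma T_meas: assumes [measurable]: "g \<in> borel_measurable borel" shows "T a g \<in> sets borel"
  unfolding T_def by measurable

lemma U_compl: "U a g = - SS a g"
  unfolding U_def SS_lo by auto

lemma U_sub: assumes "0 \<le> a" "a \<le> 1" "\<And>s. 0 \<le> g s" "s \<in> U a g" shows "s < ss"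
proof -
  have "a * g s < (1 - a) * k s" using assms(4) unfolding U_def by simp
  moreover have "0 \<le> a * g s" using assms(1,3) by simp
  ultimately have "0 < (1 - a) * k s" by linarith
  then have "0 < k s" using assms(2) by (auto simp: zero_less_mult_iff)
  then show ?thesis using k_pos_iff by simp
qed

lemma lam_lt:
  assumes f: "\<And>s t. s < t \<Longrightarrow> f s * k t < f t * k s" and "s < sh"
  shows "f s - lam f * k s < 0"
proof -
  have "f s * k sh < f sh * k s" using f assms(2) by simp
  then have "f s < f sh * k s / k sh" using k_sh by (simp add: pos_less_divide_eq)
  then show ?thesis by (simp add: lam_def)
qed

lemma lam_gt:
  assumes f: "\<And>s t. s < t \<Longrightarrow> f s * k t < f t * k s" and "sh < s"
  shows "0 < f s - lam f * k s"
proof -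
  have "f sh * k s < f s * k sh" using f assms(2) by simp
  then have "f sh * k s / k sh < f s" using k_sh by (simp add: pos_divide_less_eq)
  then show ?thesis by (simp add: lam_def)
qed

lemma lam_eq: "f sh - lam f * k sh = 0"
  using k_sh by (simp add: lam_def)

lemma P1_nonneg:
  assumes f: "\<And>s. 0 < f s" "\<And>s t. s < t \<Longrightarrow> f s * k t < f t * k s"
    and a: "0 \<le> a" "a \<le> 1" and g: "\<And>s. 0 \<le> g s"
  shows "0 \<le> P1 f a g s"
proof -
  have 1: "f s - lam f * k s \<le> 0" if "s \<le> sh"
  proof (cases "s = sh")
    case True then show ?thesis using lam_eq by simp
  next
    case False then have "s < sh" using that by simp
    then show ?thesis using lam_lt[of f s] f(2) by fastforce
  qed
  have 2: "0 < f s - lam f * k s" if "sh < s" using lam_gt[of f s] f(2) that by blast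
  show ?thesis
  proof (cases "s \<in> U a g")
    case True
    then show ?thesis using 2 a unfolding P1_def by (cases "s \<le> sh") auto
  next
    case False
    then show ?thesis using 1 a unfolding P1_def
      by (cases "s \<le> sh") (auto simp: mult_nonneg_nonpos mult_nonpos_nonpos)
  qed
qed

lemma P2_nonneg:
  assumes f: "\<And>s. 0 < f s" and a: "0 \<le> a" and g: "\<And>s. 0 \<le> g s"
  shows "0 \<le> P2 f a g s"
proof -
  have "0 \<le> a * g s - (1 - a) * k s * indicator (T a g) s"
    using a g[of s] by (cases "s \<in> T a g") (auto simp: T_def)
  moreover have "0 < lam f" using lam_pos f by blast
  ultimately show ?thesis unfolding P2_def by simp
qed

lemma P3_nonneg:
  assumes a: "0 \<le> a" and g: "\<And>s. 0 \<le> g s"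
  shows "0 \<le> P3 a g s"
  unfolding P3_def using a g[of s] by simp

lemma decomp:
  assumes f: "\<And>s. 0 < f s" "integrable lborel f" "integral\<^sup>L lborel f = 1"
    and a: "0 \<le> a" "a \<le> abar" and g: "is_density g"
  shows "integrable lborel (Phi f a g)"
    and "1 - (1 - abar) * II {..sh} f - ((1 - a) * II (SS a g) f + a * II (SS a g) g)
       = integral\<^sup>L lborel (Phi f a g) + (abar - a) * (II {..sh} f + lam f / (1 - abar))"
proof -
  have gm: "g \<in> borel_measurable borel" and gi: "integrable lborel g" and g1: "integral\<^sup>L lborel g = 1"
    and gn: "\<And>s. 0 \<le> g s"
    using g unfolding is_density_def by auto
  have a1: "a < 1" using a ab1 by simp
  note Um = U_meas[OF gm, of a] and Tm = T_meas[OF gm, of a] and Sm = SS_meas[OF gm, of a]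
  define L where "L = {..sh}"
  have Lm: "L \<in> sets borel" unfolding L_def by simp
  define E where "E s = (1-a)*(indicator (U a g) s * f s) - (1-a)*(indicator L s * f s)
      - ((1-a)*lam f)*(indicator (U a g) s * k s) + ((1-a)*lam f)*(indicator L s*k s)
      + (lam f*a)*g s - (lam f*(1-a))*(indicator (T a g) s * k s) + a*(indicator (U a g) s * g s)" for s
  have hb: "has_bochner_integral lborel E ((1-a)*II (U a g) f - (1-a)*II L f
      - ((1-a)*lam f)*II (U a g) k + ((1-a)*lam f)*II L k
      + (lam f*a)*1 - (lam f*(1-a))*II (T a g) k + a*II (U a g) g)"
    unfolding E_def
    by (intro has_bochner_integral_add has_bochner_integral_diff has_bochner_integral_mult_right
        hb_II Um Tm Lm f(2) gi k_int)
       (use hb_int[OF gi] g1 in simp)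
  have EP: "E = Phi f a g"
    by (rule ext) (simp add: E_def Phi_def P1_def P2_def P3_def L_def algebra_simps)
  from hb show "integrable lborel (Phi f a g)" unfolding EP integrable.simps by blast
  have IPhi: "integral\<^sup>L lborel (Phi f a g) = (1-a)*II (U a g) f - (1-a)*II L f
      - ((1-a)*lam f)*II (U a g) k + ((1-a)*lam f)*II L k
      + (lam f*a)*1 - (lam f*(1-a))*II (T a g) k + a*II (U a g) g"
    using hb unfolding EP by (rule has_bochner_integral_integral_eq)
  have Uf: "II (U a g) f = 1 - II (SS a g) f"
    using II_compl[OF Sm f(2)] f(3) U_compl by simp
  have Ug: "II (U a g) g = 1 - II (SS a g) g"
    using II_compl[OF Sm gi] g1 U_compl by simp
  have UT: "II (U a g) k + II (T a g) k = II {..ss} k"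
  proof -
    have "has_bochner_integral lborel (\<lambda>s. indicator (U a g) s * k s + indicator (T a g) s * k s)
        (II (U a g) k + II (T a g) k)"
      by (intro has_bochner_integral_add hb_II Um Tm k_int)
    moreover have "(\<lambda>s. indicator (U a g) s * k s + indicator (T a g) s * k s) = (\<lambda>s. indicator {..ss} s * k s)"
    proof (rule ext)
      fix s
      show "indicator (U a g) s * k s + indicator (T a g) s * k s = indicator {..ss} s * k s"
      proof (cases "s \<in> U a g")
        case True
        then have "s < ss" using U_sub[of a g s] a a1 gn by simp
        moreover have "s \<notin> T a g" using True unfolding U_def T_def by auto
        ultimately show ?thesis using True by (simp add: indicator_def)
      next
        case False
        then have "s \<in> T a g \<longleftrightarrow> s \<le> ss" unfolding U_def T_def by auto
        then show ?thesis using False by (simp add: indicator_def)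
      qed
    qed
    ultimately show ?thesis unfolding II_def using has_bochner_integral_integral_eq by metis
  qed
  have Lk: "II L k = II {..ss} k - abar / (1 - abar)" unfolding L_def by (rule sh_eq)
  show "1 - (1 - abar) * II {..sh} f - ((1 - a) * II (SS a g) f + a * II (SS a g) g)
       = integral\<^sup>L lborel (Phi f a g) + (abar - a) * (II {..sh} f + lam f / (1 - abar))"
  proof -
    define c where "c = abar / (1 - abar)"
    have c1: "lam f / (1 - abar) = lam f * (1 + c)" using ab1 by (simp add: c_def field_simps)
    have c2: "abar * (1 + c) - c = 0" using ab1 by (simp add: c_def field_simps)
    have UK: "II (U a g) k = II {..ss} k - II (T a g) k" using UT by simp
    have "(1 - (1 - abar) * II L f - ((1 - a) * II (SS a g) f + a * II (SS a g) g))
       - ((1-a)*(1 - II (SS a g) f) - (1-a)*II L f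
      - ((1-a)*lam f)*(II {..ss} k - II (T a g) k) + ((1-a)*lam f)*(II {..ss} k - c)
      + (lam f*a)*1 - (lam f*(1-a))*II (T a g) k + a*(1 - II (SS a g) g)
       + (abar - a) * (II L f + lam f * (1 + c))) = - lam f * (abar * (1 + c) - c)"
      by (simp add: algebra_simps)
    then show ?thesis unfolding IPhi Uf Ug UK Lk L_def[symmetric] c1 c_def[symmetric] c2 by simp
  qed
qed


lemma Phi_nonneg:
  assumes f: "\<And>s. 0 < f s" "\<And>s t. s < t \<Longrightarrow> f s * k t < f t * k s"
    and a: "0 \<le> a" "a \<le> 1" and g: "\<And>s. 0 \<le> g s"
  shows "0 \<le> Phi f a g s"
  unfolding Phi_def using P1_nonneg[OF f a g] P2_nonneg[OF f(1) a(1) g] P3_nonneg[OF a(1) g] by simp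

lemma pt_fC:
  assumes "P1 f0 abar g s = 0" "P2 f0 abar g s = 0" "s \<noteq> sh" "s \<noteq> ss"
  shows "g s = f_C f0 f1 x abar sh s"
proof -
  have lp: "0 < lam f0" using lam_pos f0_pos by blast
  have e2: "abar * g s = (1 - abar) * k s * indicator (T abar g) s"
    using assms(2) lp unfolding P2_def by simp
  have nz: "1 - abar \<noteq> 0" using ab1 by simp
  consider "ss < s" | "s < sh" | "sh < s" "s < ss" using assms(3,4) sh_lt by force
  then show ?thesis
  proof cases
    case 1
    then have "s \<notin> T abar g" unfolding T_def by simp
    then show ?thesis using e2 ab0 1 by (simp add: f_C_def)
  next
    case 2
    have "f0 s - lam f0 * k s \<noteq> 0" using lam_lt[of f0 s] ratio0 2 by fastforce
    then have "indicator (U abar g) s = (indicator {..sh} s :: real)"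
      using assms(1) nz unfolding P1_def by simp
    then have "s \<in> U abar g" using 2 by (simp add: indicator_def split: if_splits)
    then have "s \<notin> T abar g" unfolding U_def T_def by auto
    then show ?thesis using e2 ab0 2 by (simp add: f_C_def)
  next
    case 3
    have "f0 s - lam f0 * k s \<noteq> 0" using lam_gt[of f0 s] ratio0 3(1) by fastforce
    then have "indicator (U abar g) s = (indicator {..sh} s :: real)"
      using assms(1) nz unfolding P1_def by simp
    then have "s \<notin> U abar g" using 3 by (simp add: indicator_def split: if_splits)
    then have "s \<in> T abar g" using 3 unfolding U_def T_def by auto
    then have "abar * g s = (1 - abar) * k s" using e2 by simp
    then have "g s = (1 - abar) / abar * k s" using ab0 by (simp add: field_simps)
    then show ?thesis using 3 by (simp add: f_C_def)
  qed
qed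

lemma ae_fC:
  assumes g: "is_density g" and le: "integral\<^sup>L lborel (Phi f0 abar g) \<le> 0"
  shows "AE s in lborel. g s = f_C f0 f1 x abar sh s"
proof -
  have gn: "\<And>s. 0 \<le> g s" using g unfolding is_density_def by auto
  have int: "integrable lborel (Phi f0 abar g)"
    using decomp(1)[OF f0_pos f0_int f0_one _ _ g] ab0 by simp
  have nn: "\<And>s. 0 \<le> Phi f0 abar g s"
    using Phi_nonneg[OF f0_pos ratio0 _ _ gn] ab0 ab1 by simp
  have "integral\<^sup>L lborel (Phi f0 abar g) = 0"
  proof -
    have "0 \<le> integral\<^sup>L lborel (Phi f0 abar g)" using nn by (intro integral_nonneg_AE) auto
    then show ?thesis using le by linarith
  qed
  then have ae: "AE s in lborel. Phi f0 abar g s = 0"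
    using integral_nonneg_eq_0_iff_AE[OF int] nn by simp
  show ?thesis
    using ae AE_lborel_singleton[of sh] AE_lborel_singleton[of ss]
  proof eventually_elim
    case (elim s)
    have n1: "0 \<le> P1 f0 abar g s" by (rule P1_nonneg) (use f0_pos ratio0 gn ab0 ab1 in auto)
    have n2: "0 \<le> P2 f0 abar g s" by (rule P2_nonneg) (use f0_pos gn ab0 in auto)
    have n3: "0 \<le> P3 abar g s" by (rule P3_nonneg) (use gn ab0 in auto)
    have "P1 f0 abar g s = 0" "P2 f0 abar g s = 0"
      using elim(1) n1 n2 n3 unfolding Phi_def by linarith+
    then show ?case using pt_fC elim by blast
  qed
qed


abbreviation "fc \<equiv> f_C f0 f1 x abar sh"

lemma fc_density: "is_density fc"
  using fC_density[OF ab0 ab1 _ sh_eq] sh_lt by simp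

lemma Phi_fC:
  assumes f: "\<And>s t. s < t \<Longrightarrow> f s * k t < f t * k s"
  shows "Phi f abar fc s = 0"
proof -
  have e: "abar * ((1 - abar) / abar * k s) = (1 - abar) * k s" using ab0 by simp
  consider "s < sh" | "s = sh" | "sh < s" "s \<le> ss" | "ss < s" by force
  then show ?thesis
  proof cases
    case 1
    then have ks: "0 < k s" using sh_lt k_pos_iff by simp
    moreover have "0 < (1 - abar) * k s" using ks ab1 by simp
    ultimately have "s \<in> U abar fc" "s \<notin> T abar fc" using 1
      unfolding U_def T_def by (auto simp: f_C_def)
    then show ?thesis using 1 unfolding Phi_def P1_def P2_def P3_def by (simp add: f_C_def)
  next
    case 2
    then have "s \<notin> U abar fc" "s \<in> T abar fc" using sh_lt e
      unfolding U_def T_def by (auto simp: f_C_def)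
    then show ?thesis using 2 e lam_eq[of f] sh_lt unfolding Phi_def P1_def P2_def P3_def by (simp add: f_C_def)
  next
    case 3
    then have "s \<notin> U abar fc" "s \<in> T abar fc" using e
      unfolding U_def T_def by (auto simp: f_C_def)
    then show ?thesis using 3 e unfolding Phi_def P1_def P2_def P3_def by (simp add: f_C_def)
  next
    case 4
    then have ks: "k s < 0" using k_neg_iff by simp
    moreover have "(1 - abar) * k s < 0" using ks ab1 by (simp add: mult_pos_neg)
    ultimately have "s \<notin> U abar fc" "s \<notin> T abar fc" using 4
      unfolding U_def T_def by (auto simp: f_C_def)
    then show ?thesis using 4 sh_lt unfolding Phi_def P1_def P2_def P3_def by (simp add: f_C_def)
  qed
qed

lemma vote_fC:
  assumes "good f"
  shows "vote_prob f0 f1 x abar fc f = 1 - (1 - abar) * II {..sh} f"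
proof -
  have f: "\<And>s. 0 < f s" "integrable lborel f" "integral\<^sup>L lborel f = 1" "\<And>s t. s < t \<Longrightarrow> f s * k t < f t * k s"
    using assms unfolding good_def by auto
  have "Phi f abar fc = (\<lambda>s. 0)" by (rule ext) (rule Phi_fC[OF f(4)])
  then have "integral\<^sup>L lborel (Phi f abar fc) = 0" by simp
  then show ?thesis
    using decomp(2)[OF f(1-3) _ _ fc_density, of abar] vote_eq[OF _ ab1 fc_density f(2)] ab0 by simp
qed

lemma vote_bound:
  assumes "good f" "admissible abar a g"
  shows "vote_prob f0 f1 x a g f \<le> 1 - (1 - abar) * II {..sh} f"
    and "vote_prob f0 f1 x a g f \<ge> 1 - (1 - abar) * II {..sh} f \<Longrightarrow> a = abar \<and> integral\<^sup>L lborel (Phi f a g) \<le> 0"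
proof -
  have f: "\<And>s. 0 < f s" "integrable lborel f" "integral\<^sup>L lborel f = 1" "\<And>s t. s < t \<Longrightarrow> f s * k t < f t * k s"
    using assms unfolding good_def by auto
  have a: "0 \<le> a" "a \<le> abar" and g: "is_density g" using assms(2) unfolding admissible_def by auto
  have gn: "\<And>s. 0 \<le> g s" using g unfolding is_density_def by auto
  have a1: "a < 1" using a ab1 by simp
  have F: "0 < II {..sh} f" by (rule II_pos[of _ "sh - 1" sh]) (use f in auto)
  have lp: "0 < lam f" using lam_pos f(1) by blast
  have "0 < lam f / (1 - abar)" using lp ab1 by simp
  then have C: "0 < II {..sh} f + lam f / (1 - abar)" using F by linarith
  have nn: "0 \<le> integral\<^sup>L lborel (Phi f a g)"
    using Phi_nonneg[OF f(1,4) a(1) _ gn] a1 by (intro integral_nonneg_AE) auto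
  have eq: "1 - (1 - abar) * II {..sh} f - vote_prob f0 f1 x a g f
      = integral\<^sup>L lborel (Phi f a g) + (abar - a) * (II {..sh} f + lam f / (1 - abar))"
    using decomp(2)[OF f(1-3) a g] vote_eq[OF a(1) a1 g f(2)] by simp
  have m: "0 \<le> (abar - a) * (II {..sh} f + lam f / (1 - abar))" using a C by simp
  show "vote_prob f0 f1 x a g f \<le> 1 - (1 - abar) * II {..sh} f" using eq nn m by linarith
  assume "vote_prob f0 f1 x a g f \<ge> 1 - (1 - abar) * II {..sh} f"
  then have z: "integral\<^sup>L lborel (Phi f a g) = 0" "(abar - a) * (II {..sh} f + lam f / (1 - abar)) = 0"
    using eq nn m by linarith+
  then have "a = abar" using C by simp
  then show "a = abar \<and> integral\<^sup>L lborel (Phi f a g) \<le> 0" using z by simp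
qed

lemma opt_fC: "optimal f0 f1 x abar abar fc"
  unfolding optimal_def
proof (intro conjI allI impI)
  show "admissible abar abar fc" unfolding admissible_def using ab0 fc_density by simp
  fix a' g' assume "admissible abar a' g'"
  then show "vote_prob f0 f1 x a' g' f0 \<le> vote_prob f0 f1 x abar fc f0"
    "vote_prob f0 f1 x a' g' f1 \<le> vote_prob f0 f1 x abar fc f1"
    using vote_bound(1)[OF good0] vote_bound(1)[OF good1] vote_fC[OF good0] vote_fC[OF good1] by auto
next
  show "\<not> (\<exists>a' g'. admissible abar a' g' \<and> vote_prob f0 f1 x a' g' f0 = vote_prob f0 f1 x abar fc f0
      \<and> vote_prob f0 f1 x a' g' f1 = vote_prob f0 f1 x abar fc f1 \<and> a' < abar)"
    using vote_bound(2)[OF good0] vote_fC[OF good0] by fastforce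
qed

lemma opt_a: assumes "optimal f0 f1 x abar a g" shows "a = abar"
proof -
  have ad: "admissible abar a g" using assms unfolding optimal_def by blast
  have "vote_prob f0 f1 x abar fc f0 \<le> vote_prob f0 f1 x a g f0"
    using assms opt_fC unfolding optimal_def by blast
  then show ?thesis using vote_bound(2)[OF good0 ad] vote_fC[OF good0] by simp
qed

lemma opt_ae: assumes "optimal f0 f1 x abar a g" shows "AE s in lborel. g s = fc s"
proof -
  have ad: "admissible abar a g" using assms unfolding optimal_def by blast
  have "vote_prob f0 f1 x abar fc f0 \<le> vote_prob f0 f1 x a g f0"
    using assms opt_fC unfolding optimal_def by blast
  then have "1 - (1 - abar) * II {..sh} f0 \<le> vote_prob f0 f1 x a g f0" using vote_fC[OF good0] by simp
  then have "a = abar \<and> integral\<^sup>L lborel (Phi f0 a g) \<le> 0"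
    using vote_bound(2)[OF good0 ad] by blast
  moreover have "is_density g" using ad unfolding admissible_def by simp
  ultimately show ?thesis using ae_fC by blast
qed

lemma uniq_sh: assumes "sh' < ss" "is_density (f_C f0 f1 x abar sh')" shows "sh' = sh"
proof -
  have "integral\<^sup>L lborel (f_C f0 f1 x abar sh') = 1" using assms(2) unfolding is_density_def by simp
  then have "(1 - abar) / abar * (II {..ss} k - II {..sh'} k) = 1" using fC_int[of sh' abar] assms(1) by simp
  then have "II {..sh'} k = II {..ss} k - abar / (1 - abar)" using ab0 ab1 by (simp add: field_simps)
  then have eq: "II {..sh'} k = II {..sh} k" using sh_eq by simp
  show ?thesis
  proof (rule ccontr)
    assume "sh' \<noteq> sh"
    then consider "sh' < sh" | "sh < sh'" by linarith
    then show False
      using kap_strict[of sh' sh] kap_strict[of sh sh'] eq sh_lt assms(1) by cases auto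
  qed
qed

end


locale tm_hi = tm + assumes xg: "1/2 < x"
begin

lemma k_pos_iff_hi: "0 < k s \<longleftrightarrow> ss < s"
  using D_neg_iff[of s] xg by (simp add: k_eq zero_less_divide_iff)

lemma k_neg_iff_hi: "k s < 0 \<longleftrightarrow> s < ss"
  using D_pos_iff[of s] xg by (simp add: k_eq divide_less_0_iff)

lemma k_nonneg_ge: "ss \<le> s \<Longrightarrow> 0 \<le> k s"
  using k_neg_iff_hi[of s] by simp

lemma SS_hi: "SS a g = {s. a * g s \<le> (1 - a) * k s}"
proof -
  have "(1 - a) * D s \<le> (1 - 2 * x) * (a * g s) \<longleftrightarrow> a * g s \<le> (1 - a) * k s" for s
  proof -
    have "(1 - a) * k s = ((1 - a) * D s) / (1 - 2 * x)" by (simp add: k_eq)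
    moreover have "1 - 2 * x < 0" using xg by simp
    ultimately show ?thesis by (simp add: le_divide_eq mult.commute)
  qed
  then show ?thesis unfolding SS_def by auto
qed

lemma SS_sub: assumes "0 \<le> a" "a < 1" "\<And>s. 0 \<le> g s" shows "SS a g \<subseteq> {ss..}"
proof
  fix s assume "s \<in> SS a g"
  then have "a * g s \<le> (1 - a) * k s" unfolding SS_hi by simp
  moreover have "0 \<le> a * g s" using assms by simp
  ultimately have "0 \<le> (1 - a) * k s" by linarith
  then have "0 \<le> k s" using assms(2) by (simp add: zero_le_mult_iff)
  then show "s \<in> {ss..}" using k_neg_iff_hi[of s] by simp
qed

definition goodh where "goodh f \<longleftrightarrow> (\<forall>s. 0 < f s) \<and> integrable lborel f \<and> integral\<^sup>L lborel f = 1"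

lemma goodh0: "goodh f0" unfolding goodh_def using f0_pos f0_int f0_one by blast
lemma goodh1: "goodh f1" unfolding goodh_def using f1_pos f1_int f1_one by blast

lemma Iss: "integrable lborel f \<Longrightarrow> integral\<^sup>L lborel f = 1 \<Longrightarrow> II {ss..} f = 1 - II {..ss} f"
  using II_compl[of "{..<ss}" f] II_point[of f ss] by (simp add: Compl_lessThan)

lemma Fpos: "goodh f \<Longrightarrow> 0 < II {..ss} f"
  unfolding goodh_def by (intro II_pos[of _ "ss - 1" ss]) auto

lemma vote_bound_hi:
  assumes "goodh f" "admissible abar a g" "abar < 1"
  shows "vote_prob f0 f1 x a g f \<le> 1 - (1 - abar) * II {..ss} f - (abar - a) * II {..ss} f"
proof -
  have f: "\<And>s. 0 < f s" "integrable lborel f" "integral\<^sup>L lborel f = 1" using assms unfolding goodh_def by auto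
  have a: "0 \<le> a" "a \<le> abar" and g: "is_density g" using assms(2) unfolding admissible_def by auto
  have gm: "g \<in> borel_measurable borel" and gi: "integrable lborel g" and g1: "integral\<^sup>L lborel g = 1"
    and gn: "\<And>s. 0 \<le> g s" using g unfolding is_density_def by auto
  have a1: "a < 1" using a assms(3) by simp
  have Sm: "SS a g \<in> sets borel" by (rule SS_meas[OF gm])
  have "II (SS a g) f \<le> II {ss..} f"
    using SS_sub[OF a(1) a1 gn] Sm f by (intro II_mono) (auto intro: less_imp_le)
  moreover have "II (SS a g) g \<le> II UNIV g"
    using Sm gi gn by (intro II_mono) auto
  ultimately have "vote_prob f0 f1 x a g f \<le> (1 - a) * II {ss..} f + a * II UNIV g"
    using vote_eq[OF a(1) a1 g f(2)] a a1 by (simp add: add_mono mult_left_mono)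
  then show ?thesis using Iss[OF f(2,3)] g1 by (simp add: II_UNIV algebra_simps)
qed

lemma vote_hi:
  assumes "goodh f" "0 \<le> abar" "abar < 1" "is_density g" "\<And>s. s < ss \<Longrightarrow> g s = 0"
    "\<And>s. ss \<le> s \<Longrightarrow> abar * g s \<le> (1 - abar) * k s"
  shows "vote_prob f0 f1 x abar g f = 1 - (1 - abar) * II {..ss} f"
proof -
  have f: "\<And>s. 0 < f s" "integrable lborel f" "integral\<^sup>L lborel f = 1" using assms unfolding goodh_def by auto
  have gi: "integrable lborel g" and g1: "integral\<^sup>L lborel g = 1"
    using assms(4) unfolding is_density_def by auto
  have S: "SS abar g = {ss..}"
  proof (rule set_eqI)
    fix s
    show "s \<in> SS abar g \<longleftrightarrow> s \<in> {ss..}"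
    proof (cases "s < ss")
      case True
      then have "(1 - abar) * k s < 0" using k_neg_iff_hi[of s] assms(3) by (simp add: mult_pos_neg)
      then show ?thesis using True assms(5)[OF True] unfolding SS_hi by simp
    next
      case False
      then show ?thesis using assms(6)[of s] unfolding SS_hi by simp
    qed
  qed
  have "II {ss..} g = integral\<^sup>L lborel g"
    unfolding II_def using assms(5) by (intro Bochner_Integration.integral_cong) (auto simp: indicator_def)
  then show ?thesis using vote_eq[OF assms(2,3,4) f(2)] S Iss[OF f(2,3)] g1 by (simp add: algebra_simps)
qed

lemma opt_hi:
  assumes "0 \<le> abar" "abar < 1" "is_density g" "\<And>s. s < ss \<Longrightarrow> g s = 0"
    "\<And>s. ss \<le> s \<Longrightarrow> abar * g s \<le> (1 - abar) * k s"
  shows "optimal f0 f1 x abar abar g"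
  unfolding optimal_def
proof (intro conjI allI impI)
  show "admissible abar abar g" unfolding admissible_def using assms by simp
  fix a' g' assume ad: "admissible abar a' g'"
  then have "0 \<le> (abar - a') * II {..ss} f" if "goodh f" for f
    using Fpos[OF that] unfolding admissible_def by simp
  then show "vote_prob f0 f1 x a' g' f0 \<le> vote_prob f0 f1 x abar g f0"
    "vote_prob f0 f1 x a' g' f1 \<le> vote_prob f0 f1 x abar g f1"
    using vote_bound_hi[OF goodh0 ad assms(2)] vote_bound_hi[OF goodh1 ad assms(2)]
      vote_hi[OF goodh0 assms] vote_hi[OF goodh1 assms] goodh0 goodh1 by fastforce+
next
  show "\<not> (\<exists>a' g'. admissible abar a' g' \<and> vote_prob f0 f1 x a' g' f0 = vote_prob f0 f1 x abar g f0
      \<and> vote_prob f0 f1 x a' g' f1 = vote_prob f0 f1 x abar g f1 \<and> a' < abar)"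
  proof
    assume "\<exists>a' g'. admissible abar a' g' \<and> vote_prob f0 f1 x a' g' f0 = vote_prob f0 f1 x abar g f0
      \<and> vote_prob f0 f1 x a' g' f1 = vote_prob f0 f1 x abar g f1 \<and> a' < abar"
    then obtain a' g' where ad: "admissible abar a' g'" and e: "vote_prob f0 f1 x a' g' f0 = vote_prob f0 f1 x abar g f0"
      and lt: "a' < abar" by blast
    have "0 < (abar - a') * II {..ss} f0" using lt Fpos[OF goodh0] by simp
    then show False using vote_bound_hi[OF goodh0 ad assms(2)] vote_hi[OF goodh0 assms] e by simp
  qed
qed

lemma opt_a_hi:
  assumes "optimal f0 f1 x abar a g" "optimal f0 f1 x abar abar g'" "abar < 1"
  shows "a = abar"
proof -
  have ad: "admissible abar a g" using assms(1) unfolding optimal_def by blast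
  have ad': "admissible abar abar g'" using assms(2) unfolding optimal_def by blast
  have le: "vote_prob f0 f1 x a g f0 \<le> vote_prob f0 f1 x abar g' f0"
    "vote_prob f0 f1 x abar g' f0 \<le> vote_prob f0 f1 x a g f0"
    using assms(1,2) ad ad' unfolding optimal_def by blast+
  have "\<not> (\<exists>a' g''. admissible abar a' g'' \<and> vote_prob f0 f1 x a' g'' f0 = vote_prob f0 f1 x abar g' f0
      \<and> vote_prob f0 f1 x a' g'' f1 = vote_prob f0 f1 x abar g' f1 \<and> a' < abar)"
    using assms(2) unfolding optimal_def by blast
  moreover have "vote_prob f0 f1 x a g f1 = vote_prob f0 f1 x abar g' f1"
    using assms(1,2) ad ad' unfolding optimal_def by (meson order_antisym)
  ultimately have "\<not> a < abar" using ad le by force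
  then show ?thesis using ad unfolding admissible_def by simp
qed


lemma fstar_props:
  assumes ab0: "0 \<le> abar" and abs: "abar < alpha_star f0 f1 x"
  obtains cst where "0 < cst" "f_star f0 f1 x = (\<lambda>s. cst * (indicator {ss..} s * k s))"
    "abar * cst < 1 - abar" "abar < 1" "is_density (f_star f0 f1 x)"
proof -
  define K where "K = II {..ss} k"
  define al where "al = alpha_star f0 f1 x"
  define cst where "cst = (1 - al) / al"
  have al: "al = (K + 1) / K"
    unfolding al_def alpha_star_def Let_def kappa_II K_def using xg by simp
  have alp: "0 < al" using ab0 abs unfolding al_def by simp
  have K0: "K \<noteq> 0" "K + 1 \<noteq> 0" using alp unfolding al by auto
  have fs: "f_star f0 f1 x = (\<lambda>s. cst * (indicator {ss..} s * k s))"
    unfolding f_star_def cst_def al_def by (rule ext) (simp add: indicator_def)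
  have P: "II {ss..} k = -1 - K"
    using II_compl[of "{..<ss}" k] II_point[of k ss] k_total unfolding K_def by (simp add: Compl_lessThan)
  have c1: "cst * II {ss..} k = 1" unfolding P cst_def al using K0 by (simp add: field_simps)
  have Pn: "0 \<le> II {ss..} k" unfolding II_def
    by (intro integral_nonneg_AE) (auto simp: indicator_def k_nonneg_ge)
  have cp: "0 < cst"
  proof -
    have "0 < cst * II {ss..} k" using c1 by simp
    then show ?thesis using Pn by (auto simp: zero_less_mult_iff)
  qed
  have al1: "al < 1" using cp alp unfolding cst_def by (simp add: zero_less_divide_iff)
  have "abar * (1 - al) < al * (1 - abar)" using abs unfolding al_def[symmetric] by (simp add: algebra_simps)
  then have q: "abar * cst < 1 - abar" unfolding cst_def using alp by (simp add: field_simps)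
  have ab1: "abar < 1" using abs al1 unfolding al_def by simp
  have dens: "is_density (f_star f0 f1 x)"
    unfolding is_density_def fs
  proof (intro conjI allI)
    show "(\<lambda>s. cst * (indicator {ss..} s * k s)) \<in> borel_measurable borel" by measurable
    show "0 \<le> cst * (indicator {ss..} s * k s)" for s
      using cp k_nonneg_ge[of s] by (auto simp: indicator_def)
    show "integrable lborel (\<lambda>s. cst * (indicator {ss..} s * k s))"
      by (intro integrable_mult_right II_int) auto
    show "integral\<^sup>L lborel (\<lambda>s. cst * (indicator {ss..} s * k s)) = 1"
      using c1 unfolding II_def by simp
  qed
  show ?thesis using that[OF cp fs q ab1 dens] .
qed

lemma opt_fstar:
  assumes "0 \<le> abar" "abar < alpha_star f0 f1 x"
  shows "optimal f0 f1 x abar abar (f_star f0 f1 x)"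
proof -
  obtain cst where c: "0 < cst" "f_star f0 f1 x = (\<lambda>s. cst * (indicator {ss..} s * k s))"
    "abar * cst < 1 - abar" "abar < 1" "is_density (f_star f0 f1 x)"
    using fstar_props[OF assms] by blast
  show ?thesis
  proof (rule opt_hi[OF assms(1) c(4) c(5)])
    show "f_star f0 f1 x s = 0" if "s < ss" for s using that unfolding c(2) by simp
    show "abar * f_star f0 f1 x s \<le> (1 - abar) * k s" if "ss \<le> s" for s
    proof -
      have "abar * cst * k s \<le> (1 - abar) * k s"
        using c(3) k_nonneg_ge[OF that] by (intro mult_right_mono) auto
      then show ?thesis using that unfolding c(2) by (simp add: mult.assoc)
    qed
  qed
qed

lemma other_opt:
  assumes "0 \<le> abar" "abar < alpha_star f0 f1 x"
  shows "\<exists>g. optimal f0 f1 x abar abar g \<and> \<not> (AE s in lborel. g s = f_star f0 f1 x s)"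
proof -
  obtain cst where c: "0 < cst" "f_star f0 f1 x = (\<lambda>s. cst * (indicator {ss..} s * k s))"
    "abar * cst < 1 - abar" "abar < 1" "is_density (f_star f0 f1 x)"
    using fstar_props[OF assms] by blast
  define fs where "fs = f_star f0 f1 x"
  have fsi: "integrable lborel fs" and fs1: "integral\<^sup>L lborel fs = 1" and fsm: "fs \<in> borel_measurable borel"
    and fsn: "\<And>s. 0 \<le> fs s"
    using c(5) unfolding fs_def is_density_def by auto
  have fsp: "0 < fs s" if "ss < s" for s
    using c(1) k_pos_iff_hi[of s] that unfolding fs_def c(2) by simp
  define A where "A = {ss<..ss+1}"
  have Am: "A \<in> sets borel" unfolding A_def by simp
  define Z where "Z = II A fs"
  have Z: "0 < Z" unfolding Z_def
    by (rule II_pos[of _ ss "ss+1"]) (use fsi fsp in \<open>auto simp: A_def\<close>)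
  define q where "q = abar * cst"
  define r where "r = 1 - abar"
  have q0: "0 \<le> q" unfolding q_def using assms(1) c(1) by simp
  have qr: "q < r" unfolding q_def r_def using c(3) .
  define e where "e = min (1/2) ((r - q) * Z / (q + 1))"
  have e0: "0 < e" unfolding e_def using qr Z q0 by simp
  have e1: "e \<le> 1/2" unfolding e_def by (rule min.cobounded1)
  have e2: "e / Z \<le> (r - q) / (q + 1)" unfolding e_def using Z q0
    by (simp add: divide_le_eq min_le_iff_disj)
  define M where "M = 1 - e + e / Z"
  have qM: "q * M \<le> r"
  proof -
    have "q * (e / Z) \<le> q * ((r - q) / (q + 1))" using e2 q0 by (rule mult_left_mono)
    also have "\<dots> \<le> r - q"
    proof -
      have "q / (q + 1) \<le> 1" using q0 by simp
      then have "(r - q) * (q / (q + 1)) \<le> (r - q) * 1" using qr by (intro mult_left_mono) auto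
      moreover have "q * ((r - q) / (q + 1)) = (r - q) * (q / (q + 1))" by simp
      ultimately show ?thesis by (simp add: mult.commute)
    qed
    finally have "q * (e / Z) \<le> r - q" .
    moreover have "q * (1 - e) \<le> q" using q0 e0 by (simp add: mult_left_le)
    ultimately show ?thesis unfolding M_def by (simp add: algebra_simps)
  qed
  define g where "g s = fs s * (1 - e + (e / Z) * indicator A s)" for s
  have g_alt: "g = (\<lambda>s. (1 - e) * fs s + (e / Z) * (indicator A s * fs s))"
    unfolding g_def by (rule ext) (simp add: algebra_simps)
  have gdens: "is_density g"
    unfolding is_density_def
  proof (intro conjI allI)
    show "g \<in> borel_measurable borel" unfolding g_alt using fsm Am by measurable
    show "0 \<le> g s" for s unfolding g_def using fsn[of s] e1 e0 Z
      by (intro mult_nonneg_nonneg) (auto simp: indicator_def)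
    have hb: "has_bochner_integral lborel g ((1 - e) * 1 + (e / Z) * Z)"
      unfolding g_alt Z_def
      by (intro has_bochner_integral_add has_bochner_integral_mult_right hb_II Am fsi)
         (use hb_int[OF fsi] fs1 in simp)
    then show "integrable lborel g" by (auto simp: integrable.simps)
    show "integral\<^sup>L lborel g = 1" using has_bochner_integral_integral_eq[OF hb] Z by simp
  qed
  have "optimal f0 f1 x abar abar g"
  proof (rule opt_hi[OF assms(1) c(4) gdens])
    show "g s = 0" if "s < ss" for s using that unfolding g_def fs_def c(2) by simp
    show "abar * g s \<le> (1 - abar) * k s" if "ss \<le> s" for s
    proof -
      have ks: "0 \<le> k s" using k_nonneg_ge[OF that] .
      have "g s \<le> fs s * M" unfolding g_def M_def using fsn[of s] e0 Z
        by (intro mult_left_mono) (auto simp: indicator_def)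
      then have "abar * g s \<le> abar * (fs s * M)" using assms(1) by (rule mult_left_mono)
      also have "\<dots> = (q * M) * k s" unfolding fs_def c(2) q_def using that by simp
      also have "\<dots> \<le> r * k s" using qM ks by (rule mult_right_mono)
      finally show ?thesis unfolding r_def .
    qed
  qed
  moreover have "\<not> (AE s in lborel. g s = f_star f0 f1 x s)"
  proof (rule not_AE_eq[of "ss + 1" "ss + 2"])
    fix s assume s: "ss + 1 < s" "s < ss + 2"
    then have "g s = fs s * (1 - e)" unfolding g_def A_def by simp
    moreover have "0 < fs s" using fsp s by simp
    ultimately show "g s \<noteq> f_star f0 f1 x s" using e0 unfolding fs_def by simp
  qed simp
  ultimately show ?thesis by blast
qed

end


theorem proposition5:
  fixes f0 f1 :: "real \<Rightarrow> real" and x abar :: real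
  assumes "signal_model f0 f1"
    and "0 < x" and "x < 1" and "x \<noteq> 1/2"
    and "0 \<le> abar" and "abar \<le> 1"
    and "abar < alpha_star f0 f1 x"
  shows "(\<exists>g. optimal f0 f1 x abar abar g)
       \<and> (\<forall>a g. optimal f0 f1 x abar a g \<longrightarrow> a = abar)
       \<and> (x < 1/2 \<and> 0 < abar \<longrightarrow>
            (\<exists>sh. sh < s_star f0 f1 x
                 \<and> optimal f0 f1 x abar abar (f_C f0 f1 x abar sh)
                 \<and> (\<forall>sh'. sh' < s_star f0 f1 x \<and> optimal f0 f1 x abar abar (f_C f0 f1 x abar sh')
                          \<longrightarrow> sh' = sh)
                 \<and> (\<forall>a g. optimal f0 f1 x abar a g \<longrightarrow>
                          (AE s in lborel. g s = f_C f0 f1 x abar sh s))))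
       \<and> (1/2 < x \<longrightarrow>
            optimal f0 f1 x abar abar (f_star f0 f1 x)
          \<and> (\<exists>g. optimal f0 f1 x abar abar g \<and> \<not> (AE s in lborel. g s = f_star f0 f1 x s)))"
proof -
  interpret tm f0 f1 x using assms by unfold_locales auto
  have dens_of_opt: "\<And>a g. optimal f0 f1 x abar a g \<Longrightarrow> is_density g \<and> 0 \<le> a \<and> a \<le> abar"
    unfolding optimal_def admissible_def by blast
  show ?thesis
  proof (cases "x < 1/2")
    case xl: True
    interpret lo: tm_lo f0 f1 x using xl by unfold_locales
    show ?thesis
    proof (cases "abar = 0")
      case True
      have p1: "\<exists>g. optimal f0 f1 x abar abar g" using opt_zero[OF f0_density] True by auto
      have p2: "\<forall>a g. optimal f0 f1 x abar a g \<longrightarrow> a = abar" using dens_of_opt True by fastforce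
      show ?thesis using p1 p2 True xl by auto
    next
      case False
      then have ab0: "0 < abar" using assms(5) by simp
      obtain sh where sh: "sh < ss" "II {..sh} k = II {..ss} k - abar / (1 - abar)"
        using lo.exists_sh(2)[OF ab0 assms(7)] by blast
      have ab1: "abar < 1" using lo.exists_sh(1)[OF ab0 assms(7)] .
      interpret op: tm_opt f0 f1 x abar sh using ab0 ab1 sh by unfold_locales auto
      have p1: "\<exists>g. optimal f0 f1 x abar abar g" using op.opt_fC by blast
      have p2: "\<forall>a g. optimal f0 f1 x abar a g \<longrightarrow> a = abar" using op.opt_a by blast
      have p3: "\<exists>sh. sh < s_star f0 f1 x
                 \<and> optimal f0 f1 x abar abar (f_C f0 f1 x abar sh)
                 \<and> (\<forall>sh'. sh' < s_star f0 f1 x \<and> optimal f0 f1 x abar abar (f_C f0 f1 x abar sh')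
                          \<longrightarrow> sh' = sh)
                 \<and> (\<forall>a g. optimal f0 f1 x abar a g \<longrightarrow>
                          (AE s in lborel. g s = f_C f0 f1 x abar sh s))"
      proof (intro exI conjI allI impI)
        show "sh < s_star f0 f1 x" by (rule sh(1))
        show "optimal f0 f1 x abar abar (f_C f0 f1 x abar sh)" by (rule op.opt_fC)
        fix sh' assume "sh' < s_star f0 f1 x \<and> optimal f0 f1 x abar abar (f_C f0 f1 x abar sh')"
        then show "sh' = sh" using op.uniq_sh dens_of_opt by blast
      next
        fix a g assume "optimal f0 f1 x abar a g"
        then show "AE s in lborel. g s = f_C f0 f1 x abar sh s" by (rule op.opt_ae)
      qed
      show ?thesis using p1 p2 p3 xl by auto
    qed
  next
    case False
    then have xg: "1/2 < x" using assms(4) by simp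
    interpret hi: tm_hi f0 f1 x using xg by unfold_locales
    have ab1: "abar < 1" using hi.fstar_props[OF assms(5,7)] by blast
    have o: "optimal f0 f1 x abar abar (f_star f0 f1 x)" using hi.opt_fstar[OF assms(5,7)] .
    have p1: "\<exists>g. optimal f0 f1 x abar abar g" using o by blast
    have p2: "\<forall>a g. optimal f0 f1 x abar a g \<longrightarrow> a = abar" using hi.opt_a_hi[OF _ o ab1] by blast
    show ?thesis using p1 p2 o hi.other_opt[OF assms(5,7)] False xg by auto
  qed
qed

end
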